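(* Let $n>k\ge 1$ and $N=2^{q}$ for an integer $q\ge 0$, and let $G_1,\dots,G_N$ be simple graphs all on the vertex set $[n]$. Let $H$ be the graph on $[n]$ in which $\{1,\dots,k\}$ is a clique, $\{k+1,\dots,n\}$ is independent, and every vertex of $\{k+1,\dots,n\}$ is adjacent to every vertex of $\{1,\dots,k\}$. Build the classification instance $E$ with features $f_1,\dots,f_{2n},d_0$ as the union of blocks $B_1,\dots,B_{2N}$: for odd $i$, $B_i$ contains one negative example with $d_0=i$ and all $f_j=0$, and for each edge $\{a,b\}$ of $H$ one positive example with $d_0=i$, $f_{n+a}=f_{n+b}=1$ and all other $f_j=0$; for even $i$ with $r=i/2$, $B_i$ contains one positive example with $d_0=i$ and all $f_j=0$, and for each edge $\{a,b\}$ of $G_r$ one negative example with $d_0=i$, $f_a=f_b=1$ and all other $f_j=0$. Let $d=\log_2 N+k+1$. Then $E$ admits a decision tree of depth at most $d$ that classifies it if and only if every $G_j$, $j\in[N]$, has a vertex cover of size at most $k$.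
   Context: A classification instance is a finite set of examples (functions from a common feature set to $\mathbb{Z}$), each labeled positive or negative. A decision tree (DT) is a rooted tree whose test nodes $v$ carry a feature $f(v)$ and integer threshold $\lambda(v)$ (examples with $e(f(v))\le\lambda(v)$ go to the left child, others to the right child) and whose leaves are labeled positive or negative; $T$ classifies $E$ if every example reaches a leaf with its own label. Depth = maximum number of test nodes on a root-to-leaf path. *)

theory Defs
  imports Main
begin

(* Features: D0 is d_0, Fv j is f_j (only 1 <= j <= 2n are features of the instance). *)
datatype feat = Fv nat | D0

datatype 'f dtree = Leaf bool | Node 'f int "'f dtree" "'f dtree"

fun dt_eval :: "'f dtree \<Rightarrow> ('f \<Rightarrow> int) \<Rightarrow> bool" where
  "dt_eval (Leaf b) e = b"
| "dt_eval (Node f t l r) e = (if e f \<le> t then dt_eval l e else dt_eval r e)"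

fun dt_depth :: "'f dtree \<Rightarrow> nat" where
  "dt_depth (Leaf b) = 0"
| "dt_depth (Node f t l r) = Suc (max (dt_depth l) (dt_depth r))"

fun dt_feats :: "'f dtree \<Rightarrow> 'f set" where
  "dt_feats (Leaf b) = {}"
| "dt_feats (Node f t l r) = insert f (dt_feats l \<union> dt_feats r)"

(* A labelled example set: pairs (example, label), True = positive. *)
definition classifies :: "'f dtree \<Rightarrow> (('f \<Rightarrow> int) \<times> bool) set \<Rightarrow> bool" where
  "classifies T E \<longleftrightarrow> (\<forall>(e, b) \<in> E. dt_eval T e = b)"

definition feats :: "nat \<Rightarrow> feat set" where
  "feats n = {D0} \<union> Fv ` {1..2*n}"

definition simple_graph :: "nat \<Rightarrow> nat set set \<Rightarrow> bool" where
  "simple_graph n E \<longleftrightarrow> (\<forall>e\<in>E. \<exists>a b. e = {a, b} \<and> a \<noteq> b \<and> a \<in> {1..n} \<and> b \<in> {1..n})"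

definition has_vc :: "nat \<Rightarrow> nat set set \<Rightarrow> nat \<Rightarrow> bool" where
  "has_vc n E k \<longleftrightarrow> (\<exists>C. C \<subseteq> {1..n} \<and> card C \<le> k \<and> (\<forall>e\<in>E. e \<inter> C \<noteq> {}))"

definition H_edges :: "nat \<Rightarrow> nat \<Rightarrow> nat set set" where
  "H_edges n k = {{a, b} | a b. a \<noteq> b \<and> a \<in> {1..n} \<and> b \<in> {1..n} \<and> (a \<le> k \<or> b \<le> k)}"

definition ex :: "nat \<Rightarrow> nat set \<Rightarrow> feat \<Rightarrow> int" where
  "ex i S = (\<lambda>f. case f of D0 \<Rightarrow> int i | Fv j \<Rightarrow> (if j \<in> S then 1 else 0))"

definition block :: "nat \<Rightarrow> nat \<Rightarrow> (nat \<Rightarrow> nat set set) \<Rightarrow> nat \<Rightarrow> ((feat \<Rightarrow> int) \<times> bool) set" where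
  "block n k G i =
     (if odd i then {(ex i {}, False)} \<union> {(ex i ((\<lambda>v. n + v) ` e), True) | e. e \<in> H_edges n k}
      else {(ex i {}, True)} \<union> {(ex i e, False) | e. e \<in> G (i div 2)})"

definition inst :: "nat \<Rightarrow> nat \<Rightarrow> nat \<Rightarrow> (nat \<Rightarrow> nat set set) \<Rightarrow> ((feat \<Rightarrow> int) \<times> bool) set" where
  "inst n k q G = (\<Union>i\<in>{1..2 * 2^q}. block n k G i)"

end

theory Submission
  imports Defs
begin

fun chain :: "nat list \<Rightarrow> bool \<Rightarrow> bool \<Rightarrow> feat dtree" where
  "chain [] h m = Leaf m"
| "chain (c#cs) h m = Node (Fv c) 0 (chain cs h m) (Leaf h)"

lemma chain_eval: "dt_eval (chain cs h m) e = (if \<exists>c\<in>set cs. \<not> e (Fv c) \<le> 0 then h else m)"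
  by (induction cs) auto

lemma chain_depth: "dt_depth (chain cs h m) = length cs"
  by (induction cs) auto

lemma chain_feats: "dt_feats (chain cs h m) = Fv ` set cs"
  by (induction cs) auto

fun bal :: "(nat \<Rightarrow> feat dtree) \<Rightarrow> nat \<Rightarrow> nat \<Rightarrow> feat dtree" where
  "bal P 0 b = P (b+1)"
| "bal P (Suc q) b = Node D0 (2*int (b+2^q)) (bal P q b) (bal P q (b+2^q))"

lemma bal_eval: "x \<in> {2*b+1..2*(b+2^q)} \<Longrightarrow> e D0 = int x \<Longrightarrow>
   dt_eval (bal P q b) e = dt_eval (P ((x+1) div 2)) e"
proof (induction q arbitrary: b)
  case 0
  then have "(x+1) div 2 = b+1" by auto
  then show ?case by simp
next
  case (Suc q)
  show ?case
  proof (cases "x \<le> 2*(b+2^q)")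
    case True
    have c: "e D0 \<le> 2*int (b+2^q)" using True Suc.prems(2)
      by (metis of_nat_le_iff of_nat_mult of_nat_numeral)
    have "dt_eval (bal P (Suc q) b) e = dt_eval (bal P q b) e" using c by simp
    then show ?thesis using Suc True by auto
  next
    case False
    have c: "\<not> e D0 \<le> 2*int (b+2^q)" using False Suc.prems(2)
      by (metis of_nat_le_iff of_nat_mult of_nat_numeral)
    have "dt_eval (bal P (Suc q) b) e = dt_eval (bal P q (b+2^q)) e" using c by simp
    moreover have "x \<in> {2*(b+2^q)+1..2*(b+2^q+2^q)}" using Suc.prems False by auto
    ultimately show ?thesis using Suc by auto
  qed
qed

lemma bal_depth: "(\<forall>r\<in>{b+1..b+2^q}. dt_depth (P r) \<le> D) \<Longrightarrow> dt_depth (bal P q b) \<le> q + D"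
proof (induction q arbitrary: b)
  case 0
  then show ?case by simp
next
  case (Suc q)
  have "dt_depth (bal P q b) \<le> q + D" using Suc.IH[of b] Suc.prems by auto
  moreover have "dt_depth (bal P q (b+2^q)) \<le> q + D" using Suc.IH[of "b+2^q"] Suc.prems by auto
  ultimately show ?case by simp
qed

lemma bal_feats: "(\<forall>r\<in>{b+1..b+2^q}. dt_feats (P r) \<subseteq> F) \<Longrightarrow> D0 \<in> F \<Longrightarrow> dt_feats (bal P q b) \<subseteq> F"
proof (induction q arbitrary: b)
  case 0
  then show ?case by simp
next
  case (Suc q)
  have "dt_feats (bal P q b) \<subseteq> F" using Suc.IH[of b] Suc.prems by auto
  moreover have "dt_feats (bal P q (b+2^q)) \<subseteq> F" using Suc.IH[of "b+2^q"] Suc.prems by auto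
  ultimately show ?case using Suc.prems by simp
qed

fun pth :: "'f dtree \<Rightarrow> ('f \<Rightarrow> int) \<Rightarrow> ('f \<times> int) list" where
  "pth (Leaf b) e = []"
| "pth (Node f t l r) e = (f,t) # (if e f \<le> t then pth l e else pth r e)"

lemma pth_len: "length (pth T e) \<le> dt_depth T"
  by (induction T) auto

lemma diverge: "dt_eval T e \<noteq> dt_eval T e' \<Longrightarrow> \<exists>(f,t)\<in>set (pth T e). (e f \<le> t) \<noteq> (e' f \<le> t)"
  by (induction T) (auto split: if_splits)

lemma ex_div: "(ex x {} f \<le> t) \<noteq> (ex x S f \<le> t) \<Longrightarrow> \<exists>j. f = Fv j \<and> j \<in> S \<and> t = 0"
  by (cases f) (auto simp: ex_def split: if_splits)

definition dc :: "feat dtree \<Rightarrow> (feat \<Rightarrow> int) \<Rightarrow> nat" where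
  "dc T e = length (filter (\<lambda>p. fst p = D0) (pth T e))"

lemma dc_Leaf[simp]: "dc (Leaf b) e = 0" by (simp add: dc_def)
lemma dc_Node[simp]: "dc (Node f t l r) e = (if f = D0 then 1 else 0) + (if e f \<le> t then dc l e else dc r e)"
  by (simp add: dc_def)

lemma ex0_Fv[simp]: "ex x {} (Fv j) = 0" by (simp add: ex_def)
lemma ex_D0[simp]: "ex x S D0 = int x" by (simp add: ex_def)

lemma interval:
  fixes T :: "feat dtree"
  shows "(\<forall>x\<in>{lo..<hi}. dt_eval T (ex x {}) = even x) \<Longrightarrow>
         (\<forall>x\<in>{lo..<hi}. odd x \<longrightarrow> dc T (ex x {}) \<le> m) \<Longrightarrow>
         hi - lo \<le> 2^m \<and> (hi - lo = 2^m \<longrightarrow> (\<forall>x\<in>{lo..<hi}. even x \<longrightarrow> m \<le> dc T (ex x {})))"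
proof (induction T arbitrary: lo hi m)
  case (Leaf b)
  have h1: "hi - lo \<le> 1"
  proof (rule ccontr)
    assume "\<not> hi - lo \<le> 1"
    then have "lo \<in> {lo..<hi}" "Suc lo \<in> {lo..<hi}" by auto
    then have "b = even lo" "b = even (Suc lo)" using Leaf.prems(1) by (simp_all only: dt_eval.simps) blast+
    then show False by simp
  qed
  moreover have "1 \<le> (2::nat)^m" by simp
  ultimately have A: "hi - lo \<le> 2^m" by (rule le_trans)
  have B: "hi - lo = 2^m \<Longrightarrow> m = 0"
  proof (rule ccontr)
    assume "hi - lo = 2^m" "m \<noteq> 0"
    then have "(2::nat) \<le> 2^m" by (cases m) auto
    then show False using h1 \<open>hi - lo = 2^m\<close> by simp
  qed
  show ?case using A B by simp
next
  case (Node f t l r)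
  show ?case
  proof (cases f)
    case (Fv j)
    show ?thesis
    proof (cases "0 \<le> t")
      case True
      have ev: "\<And>x. dt_eval (Node f t l r) (ex x {}) = dt_eval l (ex x {})"
        "\<And>x. dc (Node f t l r) (ex x {}) = dc l (ex x {})" using True Fv by simp_all
      have "\<forall>x\<in>{lo..<hi}. dt_eval l (ex x {}) = even x" "\<forall>x\<in>{lo..<hi}. odd x \<longrightarrow> dc l (ex x {}) \<le> m"
        using Node.prems unfolding ev by blast+
      from Node.IH(1)[OF this] show ?thesis unfolding ev .
    next
      case False
      have ev: "\<And>x. dt_eval (Node f t l r) (ex x {}) = dt_eval r (ex x {})"
        "\<And>x. dc (Node f t l r) (ex x {}) = dc r (ex x {})" using False Fv by simp_all
      have "\<forall>x\<in>{lo..<hi}. dt_eval r (ex x {}) = even x" "\<forall>x\<in>{lo..<hi}. odd x \<longrightarrow> dc r (ex x {}) \<le> m"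
        using Node.prems unfolding ev by blast+
      from Node.IH(2)[OF this] show ?thesis unfolding ev .
    qed
  next
    case D0
    show ?thesis
    proof (cases m)
      case 0
      have h1: "hi - lo \<le> 1"
      proof (rule ccontr)
        assume "\<not> hi - lo \<le> 1"
        then have "lo \<in> {lo..<hi}" "Suc lo \<in> {lo..<hi}" by auto
        moreover have "odd lo \<or> odd (Suc lo)" by auto
        ultimately obtain x where "x \<in> {lo..<hi}" "odd x" by blast
        then have "dc (Node f t l r) (ex x {}) \<le> 0" using Node.prems(2) 0 by auto
        then show False using D0 by simp
      qed
      then show ?thesis using 0 by auto
    next
      case (Suc m')
      show ?thesis
      proof (cases "hi \<le> lo")
        case True
        then show ?thesis by simp
      next
        case False
        define s where "s = max lo (min hi (nat (t+1)))"
        have sx: "\<And>x. x \<in> {lo..<hi} \<Longrightarrow> (int x \<le> t) = (x < s)"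
          unfolding s_def by auto
        have s1: "lo \<le> s" "s \<le> hi" using False unfolding s_def by auto
        have L0: "\<And>x. x \<in> {lo..<s} \<Longrightarrow> x \<in> {lo..<hi} \<and> int x \<le> t" using sx s1 by auto
        have R0: "\<And>x. x \<in> {s..<hi} \<Longrightarrow> x \<in> {lo..<hi} \<and> \<not> int x \<le> t" using sx s1 by auto
        have L1a: "\<forall>x\<in>{lo..<s}. dt_eval l (ex x {}) = even x"
        proof
          fix x assume x: "x \<in> {lo..<s}"
          have "dt_eval (Node f t l r) (ex x {}) = even x" using Node.prems(1) L0[OF x] by blast
          then show "dt_eval l (ex x {}) = even x" using L0[OF x] D0 by simp
        qed
        have L1b: "\<forall>x\<in>{lo..<s}. odd x \<longrightarrow> dc l (ex x {}) \<le> m'"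
        proof (intro ballI impI)
          fix x assume x: "x \<in> {lo..<s}" and o: "odd x"
          have "dc (Node f t l r) (ex x {}) \<le> m" using Node.prems(2) L0[OF x] o by blast
          then show "dc l (ex x {}) \<le> m'" using L0[OF x] D0 Suc by simp
        qed
        note L1 = L1a L1b
        have R1a: "\<forall>x\<in>{s..<hi}. dt_eval r (ex x {}) = even x"
        proof
          fix x assume x: "x \<in> {s..<hi}"
          have "dt_eval (Node f t l r) (ex x {}) = even x" using Node.prems(1) R0[OF x] by blast
          then show "dt_eval r (ex x {}) = even x" using R0[OF x] D0 by simp
        qed
        have R1b: "\<forall>x\<in>{s..<hi}. odd x \<longrightarrow> dc r (ex x {}) \<le> m'"
        proof (intro ballI impI)
          fix x assume x: "x \<in> {s..<hi}" and o: "odd x"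
          have "dc (Node f t l r) (ex x {}) \<le> m" using Node.prems(2) R0[OF x] o by blast
          then show "dc r (ex x {}) \<le> m'" using R0[OF x] D0 Suc by simp
        qed
        note R1 = R1a R1b
        note IL = Node.IH(1)[OF L1] and IR = Node.IH(2)[OF R1]
        have "hi - lo = (s - lo) + (hi - s)" using s1 by simp
        then have le: "hi - lo \<le> 2^m" using IL IR Suc by simp
        have "hi - lo = 2^m \<Longrightarrow> (\<forall>x\<in>{lo..<hi}. even x \<longrightarrow> m \<le> dc (Node f t l r) (ex x {}))"
        proof -
          assume eq: "hi - lo = 2^m"
          then have e1: "s - lo = 2^m'" "hi - s = 2^m'" using IL IR Suc \<open>hi - lo = (s - lo) + (hi - s)\<close> by auto
          show ?thesis
          proof (intro ballI impI)
            fix x assume x: "x \<in> {lo..<hi}" "even x"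
            show "m \<le> dc (Node f t l r) (ex x {})"
            proof (cases "x < s")
              case True
              then have "m' \<le> dc l (ex x {})" using IL e1 x by auto
              then show ?thesis using True sx[OF x(1)] D0 Suc by simp
            next
              case False
              then have "m' \<le> dc r (ex x {})" using IR e1 x by auto
              then show ?thesis using False sx[OF x(1)] D0 Suc by simp
            qed
          qed
        qed
        then show ?thesis using le by blast
      qed
    qed
  qed
qed


lemma card_fv:
  fixes t0 :: int
  shows "finite {j. (Fv j, t0) \<in> set P} \<and> card {j. (Fv j, t0) \<in> set P} \<le> length (filter (\<lambda>p. fst p \<noteq> D0) P)"
proof -
  define g where "g p = (case fst p of Fv j \<Rightarrow> j | D0 \<Rightarrow> 0)" for p :: "feat \<times> int"
  have sub: "{j. (Fv j, t0) \<in> set P} \<subseteq> g ` set (filter (\<lambda>p. fst p \<noteq> D0) P)"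
  proof
    fix j assume "j \<in> {j. (Fv j, t0) \<in> set P}"
    then have "(Fv j, t0) \<in> set (filter (\<lambda>p. fst p \<noteq> D0) P)" by auto
    moreover have "g (Fv j, t0) = j" by (simp add: g_def)
    ultimately show "j \<in> g ` set (filter (\<lambda>p. fst p \<noteq> D0) P)" by force
  qed
  have "card {j. (Fv j, t0) \<in> set P} \<le> card (g ` set (filter (\<lambda>p. fst p \<noteq> D0) P))"
    by (rule card_mono[OF _ sub]) simp
  also have "\<dots> \<le> card (set (filter (\<lambda>p. fst p \<noteq> D0) P))" by (rule card_image_le) simp
  also have "\<dots> \<le> length (filter (\<lambda>p. fst p \<noteq> D0) P)" by (rule card_length)
  finally show ?thesis using finite_subset[OF sub] by simp
qed

lemma len_split: "length P = length (filter (\<lambda>p. fst p = D0) P) + length (filter (\<lambda>p. fst p \<noteq> D0) P)"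
  using sum_length_filter_compl[of "\<lambda>p. fst p = D0" P] by simp

theorem lemma11:
  fixes n k q :: nat and G :: "nat \<Rightarrow> nat set set"
  assumes "1 \<le> k" and "k < n"
    and "\<forall>r\<in>{1..2^q}. simple_graph n (G r)"
  shows "(\<exists>T :: feat dtree. dt_feats T \<subseteq> feats n \<and> classifies T (inst n k q G)
            \<and> dt_depth T \<le> q + k + 1)
         \<longleftrightarrow> (\<forall>j\<in>{1..2^q}. has_vc n (G j) k)"
proof
  assume "\<exists>T :: feat dtree. dt_feats T \<subseteq> feats n \<and> classifies T (inst n k q G)
            \<and> dt_depth T \<le> q + k + 1"
  then obtain T :: "feat dtree" where cl: "classifies T (inst n k q G)" and dep: "dt_depth T \<le> q + k + 1"
    by blast
  have inI: "\<And>x p. x \<in> {1..2*2^q} \<Longrightarrow> p \<in> block n k G x \<Longrightarrow> p \<in> inst n k q G"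
    unfolding inst_def by blast
  have clx: "\<And>x e b. x \<in> {1..2*2^q} \<Longrightarrow> (e,b) \<in> block n k G x \<Longrightarrow> dt_eval T e = b"
    using cl inI unfolding classifies_def by fastforce
  have zero: "\<And>x. x \<in> {1..2*2^q} \<Longrightarrow> dt_eval T (ex x {}) = even x"
  proof -
    fix x :: nat assume x: "x \<in> {1..2*2^q}"
    have "(ex x {}, even x) \<in> block n k G x" unfolding block_def by auto
    then show "dt_eval T (ex x {}) = even x" using clx[OF x] by blast
  qed
  define FC where "FC x = length (filter (\<lambda>p. fst p \<noteq> D0) (pth T (ex x {})))" for x
  have tot: "\<And>x. dc T (ex x {}) + FC x \<le> q + k + 1"
    using pth_len[of T] dep len_split unfolding dc_def FC_def by (metis le_trans)
  have oddf: "\<And>x. x \<in> {1..2*2^q} \<Longrightarrow> odd x \<Longrightarrow> k \<le> FC x"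
  proof -
    fix x :: nat assume x: "x \<in> {1..2*2^q}" and ox: "odd x"
    define P where "P = pth T (ex x {})"
    define C' where "C' = {v\<in>{1..n}. (Fv (n+v), 0) \<in> set P}"
    have cov: "\<And>u v. u \<in> {1..k+1} \<Longrightarrow> v \<in> {1..k+1} \<Longrightarrow> u \<noteq> v \<Longrightarrow> u \<in> C' \<or> v \<in> C'"
    proof -
      fix u v assume u: "u \<in> {1..k+1}" and v: "v \<in> {1..k+1}" and uv: "u \<noteq> v"
      have H: "{u,v} \<in> H_edges n k" unfolding H_edges_def using u v uv assms(2) by fastforce
      have "(ex x ((\<lambda>w. n + w) ` {u,v}), True) \<in> {(ex x ((\<lambda>v. n + v) ` e), True) | e. e \<in> H_edges n k}"
        using H by blast
      then have "(ex x ((\<lambda>w. n + w) ` {u,v}), True) \<in> block n k G x"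
        unfolding block_def using ox by simp
      then have "dt_eval T (ex x ((\<lambda>w. n + w) ` {u,v})) = True" using clx[OF x] by blast
      moreover have "dt_eval T (ex x {}) = False" using zero[OF x] ox by simp
      ultimately obtain f t where ft: "(f,t) \<in> set P"
        "(ex x {} f \<le> t) \<noteq> (ex x ((\<lambda>w. n + w) ` {u,v}) f \<le> t)"
        using diverge[of T "ex x {}" "ex x ((\<lambda>w. n + w) ` {u,v})"] unfolding P_def by auto
      from ex_div[OF ft(2)] obtain j where "f = Fv j" "j \<in> (\<lambda>w. n + w) ` {u,v}" "t = 0" by blast
      then show "u \<in> C' \<or> v \<in> C'" using ft(1) u v assms(2) unfolding C'_def by auto
    qed
    have fin: "finite ({1..k+1} - C')" by simp
    have "card ({1..k+1} - C') \<le> Suc 0"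
      using cov by (subst card_le_Suc0_iff_eq[OF fin]) blast
    moreover have "card {1..k+1} \<le> card ({1..k+1} \<inter> C') + card ({1..k+1} - C')"
    proof -
      have "{1..k+1} = ({1..k+1} \<inter> C') \<union> ({1..k+1} - C')" by blast
      then show ?thesis using card_Un_le[of "{1..k+1} \<inter> C'" "{1..k+1} - C'"] by simp
    qed
    ultimately have k1: "k \<le> card ({1..k+1} \<inter> C')" by simp
    have "card ({1..k+1} \<inter> C') \<le> card C'"
      by (rule card_mono) (auto simp: C'_def)
    also have "card C' = card ((\<lambda>v. n+v) ` C')" by (rule card_image[symmetric]) simp
    also have "\<dots> \<le> card {j. (Fv j, 0) \<in> set P}"
      using card_fv[of 0 P] by (intro card_mono) (auto simp: C'_def)
    also have "\<dots> \<le> FC x" using card_fv[of 0 P] unfolding FC_def P_def by simp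
    finally show "k \<le> FC x" using k1 by simp
  qed
  have "1 + 2*2^q - 1 \<le> (2::nat)^(Suc q) \<and> (1 + 2*2^q - 1 = (2::nat)^(Suc q) \<longrightarrow>
        (\<forall>x\<in>{1..<1 + 2*2^q}. even x \<longrightarrow> Suc q \<le> dc T (ex x {})))"
  proof (rule interval)
    show "\<forall>x\<in>{1..<1 + 2 * 2 ^ q}. dt_eval T (ex x {}) = even x" using zero by auto
    show "\<forall>x\<in>{1..<1 + 2 * 2 ^ q}. odd x \<longrightarrow> dc T (ex x {}) \<le> Suc q"
    proof (intro ballI impI)
      fix x :: nat assume "x \<in> {1..<1 + 2 * 2 ^ q}" "odd x"
      then have "k \<le> FC x" using oddf by auto
      then show "dc T (ex x {}) \<le> Suc q" using tot[of x] by simp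
    qed
  qed
  then have evd: "\<And>x. x \<in> {1..2*2^q} \<Longrightarrow> even x \<Longrightarrow> Suc q \<le> dc T (ex x {})" by auto
  show "\<forall>j\<in>{1..2^q}. has_vc n (G j) k"
  proof
    fix j :: nat assume j: "j \<in> {1..2^q}"
    define x where "x = 2*j"
    have x: "x \<in> {1..2*2^q}" "even x" "x div 2 = j" using j unfolding x_def by auto
    have fc: "FC x \<le> k" using evd[OF x(1,2)] tot[of x] by simp
    define P where "P = pth T (ex x {})"
    define C where "C = {a\<in>{1..n}. (Fv a, 0) \<in> set P}"
    have "card C \<le> card {j. (Fv j, 0) \<in> set P}"
      using card_fv[of 0 P] by (intro card_mono) (auto simp: C_def)
    also have "\<dots> \<le> FC x" using card_fv[of 0 P] unfolding FC_def P_def by simp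
    finally have cC: "card C \<le> k" using fc by simp
    have "\<forall>e\<in>G j. e \<inter> C \<noteq> {}"
    proof
      fix e assume e: "e \<in> G j"
      then obtain a b where ab: "e = {a,b}" "a \<in> {1..n}" "b \<in> {1..n}"
        using assms(3) j unfolding simple_graph_def by blast
      have "(ex x e, False) \<in> block n k G x" unfolding block_def using x e by auto
      then have "dt_eval T (ex x e) = False" using clx[OF x(1)] by blast
      moreover have "dt_eval T (ex x {}) = True" using zero[OF x(1)] x(2) by simp
      ultimately obtain f t where ft: "(f,t) \<in> set P" "(ex x {} f \<le> t) \<noteq> (ex x e f \<le> t)"
        using diverge[of T "ex x {}" "ex x e"] unfolding P_def by auto
      from ex_div[OF ft(2)] obtain i where "f = Fv i" "i \<in> e" "t = 0" by blast
      then show "e \<inter> C \<noteq> {}" using ft(1) ab unfolding C_def by auto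
    qed
    moreover have "C \<subseteq> {1..n}" unfolding C_def by auto
    ultimately show "has_vc n (G j) k" unfolding has_vc_def using cC by blast
  qed
next
  assume vc: "\<forall>j\<in>{1..2^q}. has_vc n (G j) k"
  define C where "C r = (SOME C. C \<subseteq> {1..n} \<and> card C \<le> k \<and> (\<forall>e\<in>G r. e \<inter> C \<noteq> {}))" for r
  have Cp: "\<And>r. r \<in> {1..2^q} \<Longrightarrow> C r \<subseteq> {1..n} \<and> card (C r) \<le> k \<and> (\<forall>e\<in>G r. e \<inter> C r \<noteq> {})"
  proof -
    fix r :: nat assume "r \<in> {1..2^q}"
    then have "\<exists>C. C \<subseteq> {1..n} \<and> card C \<le> k \<and> (\<forall>e\<in>G r. e \<inter> C \<noteq> {})"
      using vc unfolding has_vc_def by blast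
    then show "C r \<subseteq> {1..n} \<and> card (C r) \<le> k \<and> (\<forall>e\<in>G r. e \<inter> C r \<noteq> {})"
      unfolding C_def by (rule someI_ex)
  qed
  have finC: "\<And>r. r \<in> {1..2^q} \<Longrightarrow> finite (C r)" using Cp finite_subset by blast
  define P where "P r = Node D0 (2*int r - 1) (chain (map (\<lambda>v. n+v) [1..<k+1]) True False)
        (chain (sorted_list_of_set (C r)) False True)" for r
  define T where "T = bal P q 0"
  have "dt_depth T \<le> q + (k+1)"
    unfolding T_def
  proof (rule bal_depth)
    show "\<forall>r\<in>{0 + 1..0 + 2 ^ q}. dt_depth (P r) \<le> k + 1"
      using Cp finC by (auto simp: P_def chain_depth)
  qed
  moreover have "dt_feats T \<subseteq> feats n"
    unfolding T_def
  proof (rule bal_feats)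
    show "D0 \<in> feats n" by (simp add: feats_def)
    show "\<forall>r\<in>{0 + 1..0 + 2 ^ q}. dt_feats (P r) \<subseteq> feats n"
    proof
      fix r :: nat assume r: "r \<in> {0 + 1..0 + 2 ^ q}"
      then have "C r \<subseteq> {1..n}" "finite (C r)" using Cp finC by auto
      then show "dt_feats (P r) \<subseteq> feats n"
        using assms(2) by (auto simp: P_def chain_feats feats_def)
    qed
  qed
  moreover have "classifies T (inst n k q G)"
    unfolding classifies_def
  proof (clarify)
    fix e b assume "(e, b) \<in> inst n k q G"
    then obtain i where i: "i \<in> {1..2*2^q}" and eb: "(e,b) \<in> block n k G i"
      unfolding inst_def by blast
    define r where "r = (i+1) div 2"
    have r: "r \<in> {1..2^q}" using i unfolding r_def by auto
    have eD: "e D0 = int i" using eb unfolding block_def by (auto split: if_splits)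
    have "dt_eval T e = dt_eval (P r) e"
      unfolding T_def r_def by (rule bal_eval) (use i eD in auto)
    also have "\<dots> = b"
    proof (cases "odd i")
      case True
      then have ir: "int i = 2*int r - 1" unfolding r_def by (auto elim!: oddE)
      have PE: "dt_eval (P r) e = dt_eval (chain (map (\<lambda>v. n+v) [1..<k+1]) True False) e"
        unfolding P_def using eD ir by simp
      from eb True consider "e = ex i {}" "b = False"
        | e0 where "e0 \<in> H_edges n k" "e = ex i ((\<lambda>v. n + v) ` e0)" "b = True"
        unfolding block_def by auto
      then show ?thesis
      proof cases
        case 1
        then show ?thesis using PE by (simp add: chain_eval)
      next
        case 2
        then obtain a c where ac: "e0 = {a,c}" "a \<in> {1..n}" "a \<le> k"
          unfolding H_edges_def by (auto simp: insert_commute)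
        have hv: "\<exists>v\<in>set (map (\<lambda>v. n+v) [1..<k+1]). \<not> e (Fv v) \<le> 0"
          using ac 2 by (auto simp: ex_def intro!: bexI[of _ "n+a"])
        have "dt_eval (chain (map (\<lambda>v. n+v) [1..<k+1]) True False) e = True"
          by (simp only: chain_eval hv if_True)
        then show ?thesis using PE 2 by simp
      qed
    next
      case False
      then have ir: "i = 2*r" "i div 2 = r" unfolding r_def by auto
      have PE: "dt_eval (P r) e = dt_eval (chain (sorted_list_of_set (C r)) False True) e"
        unfolding P_def using eD ir by simp
      from eb False ir consider "e = ex i {}" "b = True"
        | e0 where "e0 \<in> G r" "e = ex i e0" "b = False"
        unfolding block_def by auto
      then show ?thesis
      proof cases
        case 1
        then show ?thesis using PE by (simp add: chain_eval)
      next
        case 2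
        then obtain c where c: "c \<in> e0" "c \<in> C r" using Cp[OF r] by blast
        have hv: "\<exists>v\<in>set (sorted_list_of_set (C r)). \<not> e (Fv v) \<le> 0"
          using c 2 finC[OF r] by (auto simp: ex_def intro!: bexI[of _ c])
        have "dt_eval (chain (sorted_list_of_set (C r)) False True) e = False"
          by (simp only: chain_eval hv if_True)
        then show ?thesis using PE 2 by simp
      qed
    qed
    finally show "dt_eval T e = b" .
  qed
  ultimately show "\<exists>T :: feat dtree. dt_feats T \<subseteq> feats n \<and> classifies T (inst n k q G)
            \<and> dt_depth T \<le> q + k + 1" by auto
qed

end
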